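(* Let $\varepsilon\in(0,\frac12)$ and $a\ge1$, and let $G$ be a graph. Assume that for every induced subgraph $F$ of $G$ with $|F|\ge\varepsilon^{2a}|G|$, there exists $k\in[2,1/\varepsilon]$ such that there is a complete or anticomplete $(k,|F|/k^a)$-blockade in $F$. Then $G$ has an $\varepsilon$-restricted induced subgraph with at least $\varepsilon^{3a}|G|$ vertices.
   Context: Graphs are finite and simple; $|G|$ is the number of vertices of $G$ and $\overline G$ its complement. $G$ is $\varepsilon$-sparse if its maximum degree is at most $\varepsilon|G|$, and $\varepsilon$-restricted if one of $G,\overline G$ is $\varepsilon$-sparse. A blockade in $G$ is a sequence $(B_1,\ldots,B_m)$ of disjoint subsets of $V(G)$, with length $m$ and width $\min_i|B_i|$; a $(k,w)$-blockade has length at least $k$ and width at least $w$. A blockade is complete (resp. anticomplete) if between any two distinct blocks all (resp. no) edges are present. *)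

theory Defs
  imports Complex_Main
begin

text \<open>A finite simple graph is given by a finite vertex set V and a symmetric,
irreflexive adjacency relation E. Induced subgraphs are given by vertex subsets S of V.\<close>

definition graph :: "'a set \<Rightarrow> ('a \<Rightarrow> 'a \<Rightarrow> bool) \<Rightarrow> bool" where
  "graph V E \<longleftrightarrow> finite V \<and> (\<forall>x y. E x y \<longrightarrow> E y x) \<and> (\<forall>x. \<not> E x x)"

definition sparse :: "real \<Rightarrow> 'a set \<Rightarrow> ('a \<Rightarrow> 'a \<Rightarrow> bool) \<Rightarrow> bool" where
  "sparse eps S E \<longleftrightarrow> (\<forall>v\<in>S. real (card {u\<in>S. E v u}) \<le> eps * real (card S))"

definition compl_rel :: "('a \<Rightarrow> 'a \<Rightarrow> bool) \<Rightarrow> 'a \<Rightarrow> 'a \<Rightarrow> bool" where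
  "compl_rel E x y \<longleftrightarrow> x \<noteq> y \<and> \<not> E x y"

definition restricted :: "real \<Rightarrow> 'a set \<Rightarrow> ('a \<Rightarrow> 'a \<Rightarrow> bool) \<Rightarrow> bool" where
  "restricted eps S E \<longleftrightarrow> sparse eps S E \<or> sparse eps S (compl_rel E)"

definition blockade :: "'a set \<Rightarrow> nat \<Rightarrow> (nat \<Rightarrow> 'a set) \<Rightarrow> bool" where
  "blockade S m B \<longleftrightarrow> (\<forall>i<m. B i \<subseteq> S) \<and> (\<forall>i<m. \<forall>j<m. i \<noteq> j \<longrightarrow> B i \<inter> B j = {})"

definition kw_blockade :: "'a set \<Rightarrow> nat \<Rightarrow> real \<Rightarrow> nat \<Rightarrow> (nat \<Rightarrow> 'a set) \<Rightarrow> bool" where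
  "kw_blockade S k w m B \<longleftrightarrow> blockade S m B \<and> k \<le> m \<and> (\<forall>i<m. w \<le> real (card (B i)))"

definition complete_blockade :: "('a \<Rightarrow> 'a \<Rightarrow> bool) \<Rightarrow> nat \<Rightarrow> (nat \<Rightarrow> 'a set) \<Rightarrow> bool" where
  "complete_blockade E m B \<longleftrightarrow>
     (\<forall>i<m. \<forall>j<m. i \<noteq> j \<longrightarrow> (\<forall>x\<in>B i. \<forall>y\<in>B j. E x y))"

definition anticomplete_blockade :: "('a \<Rightarrow> 'a \<Rightarrow> bool) \<Rightarrow> nat \<Rightarrow> (nat \<Rightarrow> 'a set) \<Rightarrow> bool" where
  "anticomplete_blockade E m B \<longleftrightarrow>
     (\<forall>i<m. \<forall>j<m. i \<noteq> j \<longrightarrow> (\<forall>x\<in>B i. \<forall>y\<in>B j. \<not> E x y))"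

end

theory Submission
  imports Defs
begin

definition fam :: "('a \<Rightarrow> 'a \<Rightarrow> bool) \<Rightarrow> nat \<Rightarrow> 'a set set \<Rightarrow> 'a set \<Rightarrow> bool" where
  "fam R m AA F \<longleftrightarrow> finite AA \<and> (\<forall>A\<in>AA. A \<subseteq> F \<and> card A = m) \<and>
     (\<forall>A\<in>AA. \<forall>A'\<in>AA. A \<noteq> A' \<longrightarrow> A \<inter> A' = {} \<and> (\<forall>x\<in>A. \<forall>y\<in>A'. R x y))"

lemma fam_mono: "fam R m AA F \<Longrightarrow> F \<subseteq> F' \<Longrightarrow> fam R m AA F'"
  unfolding fam_def by blast

lemma famD:
  assumes "fam R m AA F"
  shows "finite AA" "A \<in> AA \<Longrightarrow> A \<subseteq> F" "A \<in> AA \<Longrightarrow> card A = m"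
    "A \<in> AA \<Longrightarrow> A' \<in> AA \<Longrightarrow> A \<noteq> A' \<Longrightarrow> A \<inter> A' = {}"
    "A \<in> AA \<Longrightarrow> A' \<in> AA \<Longrightarrow> A \<noteq> A' \<Longrightarrow> x \<in> A \<Longrightarrow> y \<in> A' \<Longrightarrow> R x y"
proof -
  have f: "finite AA \<and> (\<forall>A\<in>AA. A \<subseteq> F \<and> card A = m) \<and>
     (\<forall>A\<in>AA. \<forall>A'\<in>AA. A \<noteq> A' \<longrightarrow> A \<inter> A' = {} \<and> (\<forall>x\<in>A. \<forall>y\<in>A'. R x y))"
    using assms unfolding fam_def by assumption
  show "finite AA" using f by (rule conjunct1)
  show "A \<in> AA \<Longrightarrow> A \<subseteq> F" using f by simp
  show "A \<in> AA \<Longrightarrow> card A = m" using f by simp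
  show "A \<in> AA \<Longrightarrow> A' \<in> AA \<Longrightarrow> A \<noteq> A' \<Longrightarrow> A \<inter> A' = {}" using f by simp
  show "A \<in> AA \<Longrightarrow> A' \<in> AA \<Longrightarrow> A \<noteq> A' \<Longrightarrow> x \<in> A \<Longrightarrow> y \<in> A' \<Longrightarrow> R x y" using f by simp
qed

lemma famI:
  assumes "finite AA" "\<And>A. A \<in> AA \<Longrightarrow> A \<subseteq> F" "\<And>A. A \<in> AA \<Longrightarrow> card A = m"
    "\<And>A A'. A \<in> AA \<Longrightarrow> A' \<in> AA \<Longrightarrow> A \<noteq> A' \<Longrightarrow> A \<inter> A' = {}"
    "\<And>A A' x y. A \<in> AA \<Longrightarrow> A' \<in> AA \<Longrightarrow> A \<noteq> A' \<Longrightarrow> x \<in> A \<Longrightarrow> y \<in> A' \<Longrightarrow> R x y"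
  shows "fam R m AA F"
  unfolding fam_def using assms by simp

lemma combine:
  fixes k m :: nat and p :: real
  assumes m: "0 < m" and k: "0 < k"
    and CF: "\<forall>i<k. C i \<subseteq> F"
    and CR: "\<forall>i<k. \<forall>j<k. i \<noteq> j \<longrightarrow> C i \<inter> C j = {} \<and> (\<forall>x\<in>C i. \<forall>y\<in>C j. R x y)"
    and fams: "\<forall>j<k. fam R m (AA j) (C j) \<and> fam R' m (CC j) (C j) \<and> real (card (AA j) * card (CC j)) \<ge> p / k"
  shows "\<exists>A0 C0. fam R m A0 F \<and> fam R' m C0 F \<and> real (card A0 * card C0) \<ge> p"
proof -
  have fA: "\<And>j. j < k \<Longrightarrow> fam R m (AA j) (C j)" using fams by blast
  have fC: "\<And>j. j < k \<Longrightarrow> fam R' m (CC j) (C j)" using fams by blast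
  have pj: "\<And>j. j < k \<Longrightarrow> p / real k \<le> real (card (AA j) * card (CC j))" using fams by blast
  have CFj: "\<And>j. j < k \<Longrightarrow> C j \<subseteq> F" using CF by blast
  have CD: "\<And>i j. i < k \<Longrightarrow> j < k \<Longrightarrow> i \<noteq> j \<Longrightarrow> C i \<inter> C j = {}" using CR by blast
  have CRR: "\<And>i j x y. i < k \<Longrightarrow> j < k \<Longrightarrow> i \<noteq> j \<Longrightarrow> x \<in> C i \<Longrightarrow> y \<in> C j \<Longrightarrow> R x y" using CR by blast
  define A0 where "A0 = (\<Union>j<k. AA j)"
  have fin: "\<forall>j<k. finite (AA j)" using fA famD(1) by blast
  have memA: "\<And>A. A \<in> A0 \<Longrightarrow> \<exists>j<k. A \<in> AA j" unfolding A0_def by blast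
  have famA: "fam R m A0 F"
  proof (rule famI)
    show "finite A0" unfolding A0_def using fin by auto
  next
    fix A assume "A \<in> A0"
    then obtain j where j: "j < k" "A \<in> AA j" using memA by blast
    show "A \<subseteq> F" using famD(2)[OF fA[OF j(1)] j(2)] CFj[OF j(1)] by blast
    show "card A = m" using famD(3)[OF fA[OF j(1)] j(2)] .
  next
    fix A A' assume AA': "A \<in> A0" "A' \<in> A0" "A \<noteq> A'"
    then obtain i j where ij: "i < k" "j < k" "A \<in> AA i" "A' \<in> AA j" using memA by blast
    have sub: "A \<subseteq> C i" "A' \<subseteq> C j" using famD(2)[OF fA[OF ij(1)] ij(3)] famD(2)[OF fA[OF ij(2)] ij(4)] by auto
    show "A \<inter> A' = {}"
    proof (cases "i = j")
      case True then show ?thesis using famD(4)[OF fA[OF ij(1)] ij(3)] ij(4) AA'(3) by simp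
    next
      case False then show ?thesis using CD[OF ij(1,2) False] sub by blast
    qed
  next
    fix A A' x y assume AA': "A \<in> A0" "A' \<in> A0" "A \<noteq> A'" and xy: "x \<in> A" "y \<in> A'"
    then obtain i j where ij: "i < k" "j < k" "A \<in> AA i" "A' \<in> AA j" using memA by blast
    have sub: "A \<subseteq> C i" "A' \<subseteq> C j" using famD(2)[OF fA[OF ij(1)] ij(3)] famD(2)[OF fA[OF ij(2)] ij(4)] by auto
    show "R x y"
    proof (cases "i = j")
      case True then show ?thesis using famD(5)[OF fA[OF ij(1)] ij(3) _ AA'(3) xy] ij(4) by simp
    next
      case False then show ?thesis using CRR[OF ij(1,2) False] sub xy by blast
    qed
  qed
  have disj: "\<forall>i\<in>{..<k}. \<forall>j\<in>{..<k}. i \<noteq> j \<longrightarrow> AA i \<inter> AA j = {}"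
  proof (intro ballI impI)
    fix i j assume ij: "i \<in> {..<k}" "j \<in> {..<k}" "i \<noteq> j"
    show "AA i \<inter> AA j = {}"
    proof (rule ccontr)
      assume "AA i \<inter> AA j \<noteq> {}"
      then obtain A where A: "A \<in> AA i" "A \<in> AA j" by blast
      have ik: "i < k" "j < k" using ij by auto
      have "A \<subseteq> C i" "A \<subseteq> C j" "card A = m"
        using famD(2)[OF fA[OF ik(1)] A(1)] famD(2)[OF fA[OF ik(2)] A(2)] famD(3)[OF fA[OF ik(1)] A(1)] by auto
      then have "A = {}" using CD[OF ik ij(3)] by blast
      then show False using \<open>card A = m\<close> m by simp
    qed
  qed
  have cardA: "card A0 = (\<Sum>j<k. card (AA j))"
    unfolding A0_def by (rule card_UN_disjoint) (use fin disj in auto)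
  define S where "S = (\<lambda>j. card (CC j)) ` {..<k}"
  have Sfin: "finite S" and Sne: "S \<noteq> {}" unfolding S_def using k by auto
  have "Max S \<in> S" by (rule Max_in[OF Sfin Sne])
  then obtain j0 where j0: "j0 < k" "card (CC j0) = Max S" unfolding S_def by auto
  have jmax: "\<forall>j<k. card (CC j) \<le> card (CC j0)"
  proof (intro allI impI)
    fix j assume "j < k"
    then have "card (CC j) \<in> S" unfolding S_def by blast
    then show "card (CC j) \<le> card (CC j0)" unfolding j0(2) by (rule Max_ge[OF Sfin])
  qed
  have "C j0 \<subseteq> F" using CF j0(1) by blast
  moreover have "fam R' m (CC j0) (C j0)" using fC j0(1) by blast
  ultimately have famC: "fam R' m (CC j0) F" using fam_mono by blast
  have e1: "real (card A0 * card (CC j0)) = (\<Sum>j<k. real (card (AA j)) * real (card (CC j0)))"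
    using cardA by (simp add: sum_distrib_right)
  have e2: "(\<Sum>j<k. real (card (AA j) * card (CC j))) \<le> (\<Sum>j<k. real (card (AA j)) * real (card (CC j0)))"
  proof (rule sum_mono)
    fix j assume "j \<in> {..<k}"
    then have "real (card (CC j)) \<le> real (card (CC j0))" using jmax by simp
    then have "real (card (AA j)) * real (card (CC j)) \<le> real (card (AA j)) * real (card (CC j0))"
      by (rule mult_left_mono) simp
    then show "real (card (AA j) * card (CC j)) \<le> real (card (AA j)) * real (card (CC j0))" by simp
  qed
  have e3: "(\<Sum>j<k. p / real k) \<le> (\<Sum>j<k. real (card (AA j) * card (CC j)))"
  proof (rule sum_mono)
    fix j assume "j \<in> {..<k}"
    then show "p / real k \<le> real (card (AA j) * card (CC j))" using pj by blast
  qed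
  have e4: "(\<Sum>j<k. p / real k) = p" using k by simp
  have "p \<le> real (card A0 * card (CC j0))" using e1 e2 e3 e4 by linarith
  then show ?thesis using famA famC by blast
qed

lemma final:
  assumes fam: "fam R m AA V" and Q: "\<And>x y. Q x y \<Longrightarrow> \<not> R x y" and Qirr: "\<And>x. \<not> Q x x"
    and fV: "finite V" and eps: "0 < eps" and big: "real (card AA) \<ge> 1 / eps"
  shows "\<Union>AA \<subseteq> V" "card (\<Union>AA) = card AA * m"
    "\<forall>v\<in>\<Union>AA. real (card {u\<in>\<Union>AA. Q v u}) \<le> eps * real (card (\<Union>AA))"
proof -
  show "\<Union>AA \<subseteq> V" using famD(2)[OF fam] by blast
  have finA: "\<And>A. A \<in> AA \<Longrightarrow> finite A"
  proof -
    fix A assume "A \<in> AA"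
    then have "A \<subseteq> V" using famD(2)[OF fam] by blast
    then show "finite A" using fV finite_subset by blast
  qed
  have "pairwise disjnt AA" unfolding pairwise_def disjnt_def using famD(4)[OF fam] by blast
  then have "card (\<Union>AA) = sum card AA" using card_Union_disjoint finA by blast
  also have "\<dots> = card AA * m" using famD(3)[OF fam] by simp
  finally show cU: "card (\<Union>AA) = card AA * m" .
  show "\<forall>v\<in>\<Union>AA. real (card {u\<in>\<Union>AA. Q v u}) \<le> eps * real (card (\<Union>AA))"
  proof
    fix v assume "v \<in> \<Union>AA"
    then obtain A where A: "A \<in> AA" "v \<in> A" by blast
    have sub: "{u\<in>\<Union>AA. Q v u} \<subseteq> A"
    proof
      fix u assume "u \<in> {u\<in>\<Union>AA. Q v u}"
      then obtain A' where u: "A' \<in> AA" "u \<in> A'" "Q v u" by blast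
      show "u \<in> A"
      proof (rule ccontr)
        assume "u \<notin> A"
        then have "A \<noteq> A'" using u by blast
        then have "R v u" using famD(5)[OF fam A(1) u(1) _ A(2) u(2)] by blast
        then show False using Q[OF u(3)] by simp
      qed
    qed
    have "card {u\<in>\<Union>AA. Q v u} \<le> card A" by (rule card_mono[OF finA[OF A(1)] sub])
    also have "card A = m" using famD(3)[OF fam A(1)] .
    finally have "real (card {u\<in>\<Union>AA. Q v u}) \<le> real m" by simp
    also have "real m \<le> eps * real (card AA) * real m"
    proof -
      have "eps * real (card AA) \<ge> 1" using big eps by (simp add: field_simps)
      then have "1 * real m \<le> (eps * real (card AA)) * real m" by (rule mult_right_mono) simp
      then show ?thesis by simp
    qed
    finally show "real (card {u\<in>\<Union>AA. Q v u}) \<le> eps * real (card (\<Union>AA))" using cU by simp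
  qed
qed

lemma main:
  fixes V :: "'a set" and E :: "'a \<Rightarrow> 'a \<Rightarrow> bool" and eps a T :: real and m :: nat
  assumes G: "graph V E"
    and eps: "0 < eps" "eps < 1/2" and a: "1 \<le> a"
    and H: "\<forall>S. S \<subseteq> V \<and> real (card S) \<ge> eps powr (2*a) * real (card V) \<longrightarrow>
           (\<exists>k::nat. 2 \<le> k \<and> real k \<le> 1/eps \<and>
              (\<exists>m B. kw_blockade S k (real (card S) / (real k) powr a) m B \<and>
                     (complete_blockade E m B \<or> anticomplete_blockade E m B)))"
    and T: "T = eps powr (2*a) * real (card V)" and T1: "1 < T"
    and m: "m = nat \<lceil>T * eps powr a\<rceil>" and m0: "0 < m"
  shows "F \<subseteq> V \<Longrightarrow> T * eps powr a \<le> r \<Longrightarrow> r \<le> real (card F) \<Longrightarrow>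
    \<exists>A0 C0. fam (\<lambda>x y. \<not> E x y) m A0 F \<and> fam E m C0 F \<and> real (card A0 * card C0) \<ge> (r / T) powr (1/a)"
proof (induction "card F" arbitrary: F r rule: less_induct)
  case (less F r)
  have fV: "finite V" using G unfolding graph_def by blast
  have fF: "finite F" using less.prems(1) fV finite_subset by blast
  have Mpos: "0 < T * eps powr a" using T1 eps by simp
  have rpos: "0 < r" using Mpos less.prems(2) by linarith
  show ?case
  proof (cases "r < T")
    case True
    have "\<lceil>T * eps powr a\<rceil> \<le> int (card F)"
      using less.prems(2,3) by (simp add: ceiling_le_iff)
    then have "m \<le> card F" unfolding m by (subst nat_le_iff)
    then obtain A where A: "A \<subseteq> F" "card A = m" by (meson obtain_subset_with_card_n)
    have f: "fam R m {A} F" for R by (rule famI) (use A in auto)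
    have "(r / T) powr (1/a) \<le> 1"
      by (rule powr_le1) (use a True rpos T1 in auto)
    then show ?thesis using f[of "\<lambda>x y. \<not> E x y"] f[of E] by fastforce
  next
    case False
    have cFT: "real (card F) \<ge> eps powr (2*a) * real (card V)" using False less.prems(3) T by simp
    obtain k mm B where k: "2 \<le> k" "real k \<le> 1/eps"
      and kw: "kw_blockade F k (real (card F) / (real k) powr a) mm B"
      and cb: "complete_blockade E mm B \<or> anticomplete_blockade E mm B"
      using H[rule_format, OF conjI[OF less.prems(1) cFT]] by blast
    define r' where "r' = r / (real k) powr a"
    have kpos: "0 < real k" using k by simp
    have ka: "real k powr a \<ge> real k"
    proof -
      have "real k powr 1 \<le> real k powr a" by (rule powr_mono) (use a k in auto)
      then show ?thesis using kpos by simp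
    qed
    have kapos: "0 < real k powr a" using kpos by simp
    have r'half: "r' \<le> r / 2"
    proof -
      have "2 \<le> real k powr a" using ka k by linarith
      then show ?thesis unfolding r'_def using rpos kapos by (intro divide_left_mono) auto
    qed
    have kle: "real k powr a \<le> (1/eps) powr a" by (rule powr_mono2) (use a k in auto)
    have r'M: "T * eps powr a \<le> r'"
    proof -
      have "T * eps powr a = T / (1/eps) powr a" using eps by (simp add: powr_divide)
      also have "\<dots> \<le> T / real k powr a" using kle kapos T1 by (simp add: frac_le)
      also have "\<dots> \<le> r'" unfolding r'_def using False kapos by (simp add: divide_right_mono)
      finally show ?thesis .
    qed
    have r'pos: "0 < r'" using r'M Mpos by linarith
    have blk: "\<forall>i<mm. B i \<subseteq> F" "\<forall>i<mm. \<forall>j<mm. i \<noteq> j \<longrightarrow> B i \<inter> B j = {}" "k \<le> mm"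
      "\<forall>i<mm. real (card F) / real k powr a \<le> real (card (B i))"
      using kw unfolding kw_blockade_def blockade_def by auto
    have cardB: "\<forall>j<k. r' \<le> real (card (B j))"
    proof (intro allI impI)
      fix j assume "j < k"
      have "r' \<le> real (card F) / real k powr a" unfolding r'_def
        using less.prems(3) kapos by (simp add: divide_right_mono)
      moreover have "j < mm" using \<open>j < k\<close> blk(3) by simp
      ultimately show "r' \<le> real (card (B j))" using blk(4) by (meson order_trans)
    qed
    have n2: "real (card F) \<ge> 2"
    proof -
      have "real (card F) > 1" using False T1 less.prems(3) by linarith
      then have "1 < card F" by simp
      then have "2 \<le> card F" by simp
      then show ?thesis by simp
    qed
    have ceil_lt: "nat \<lceil>r'\<rceil> < card F"
    proof -
      have "real_of_int \<lceil>r'\<rceil> < r' + 1" by linarith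
      also have "\<dots> \<le> real (card F)" using r'half less.prems(3) n2 by linarith
      finally have "real_of_int \<lceil>r'\<rceil> < real_of_int (int (card F))" by simp
      then have h: "\<lceil>r'\<rceil> < int (card F)" by (simp only: of_int_less_iff)
      have "0 \<le> \<lceil>r'\<rceil>" using r'pos by simp
      then show ?thesis using h nat_less_iff by simp
    qed
    have "\<forall>j. \<exists>Cj. j < k \<longrightarrow> Cj \<subseteq> B j \<and> card Cj = nat \<lceil>r'\<rceil>"
    proof (intro allI)
      fix j show "\<exists>Cj. j < k \<longrightarrow> Cj \<subseteq> B j \<and> card Cj = nat \<lceil>r'\<rceil>"
      proof (cases "j < k")
        case False then show ?thesis by blast
      next
      case True
      then have "j < k" .
      have "\<lceil>r'\<rceil> \<le> int (card (B j))"
        using cardB \<open>j < k\<close> by (simp add: ceiling_le_iff)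
      then have "nat \<lceil>r'\<rceil> \<le> card (B j)" by (subst nat_le_iff)
      then obtain Cj where "Cj \<subseteq> B j" "card Cj = nat \<lceil>r'\<rceil>" by (rule obtain_subset_with_card_n)
      then show ?thesis by blast
      qed
    qed
    then obtain C where C0: "\<forall>j. j < k \<longrightarrow> C j \<subseteq> B j \<and> card (C j) = nat \<lceil>r'\<rceil>" by (rule choice[THEN exE])
    then have C: "\<forall>j<k. C j \<subseteq> B j \<and> card (C j) = nat \<lceil>r'\<rceil>" by simp
    have CF: "\<forall>i<k. C i \<subseteq> F"
    proof (intro allI impI)
      fix i assume "i < k"
      then have "C i \<subseteq> B i" "i < mm" using C blk(3) by auto
      then show "C i \<subseteq> F" using blk(1) by blast
    qed
    have "\<forall>j. \<exists>X. j < k \<longrightarrow> fam (\<lambda>x y. \<not> E x y) m (fst X) (C j) \<and> fam E m (snd X) (C j) \<and>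
                 real (card (fst X) * card (snd X)) \<ge> (r' / T) powr (1/a)"
    proof (intro allI)
      fix j show "\<exists>X. j < k \<longrightarrow> fam (\<lambda>x y. \<not> E x y) m (fst X) (C j) \<and> fam E m (snd X) (C j) \<and>
                 real (card (fst X) * card (snd X)) \<ge> (r' / T) powr (1/a)"
      proof (cases "j < k")
        case False then show ?thesis by blast
      next
      case True
      then have j: "j < k" .
      have "card (C j) < card F" using C j ceil_lt by simp
      moreover have "C j \<subseteq> V" using CF j less.prems(1) by blast
      moreover have "r' \<le> real (card (C j))"
      proof -
        have "0 \<le> \<lceil>r'\<rceil>" using r'pos by simp
        then have "real (nat \<lceil>r'\<rceil>) = real_of_int \<lceil>r'\<rceil>" by simp
        moreover have "r' \<le> real_of_int \<lceil>r'\<rceil>" by (rule le_of_int_ceiling)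
        ultimately show ?thesis using C j by simp
      qed
      ultimately have "\<exists>A0 C0. fam (\<lambda>x y. \<not> E x y) m A0 (C j) \<and> fam E m C0 (C j) \<and>
                 real (card A0 * card C0) \<ge> (r' / T) powr (1/a)"
        by (rule less.hyps[OF _ _ r'M])
      then obtain A0 C0 where "fam (\<lambda>x y. \<not> E x y) m A0 (C j)" "fam E m C0 (C j)"
                 "real (card A0 * card C0) \<ge> (r' / T) powr (1/a)" by blast
      then show ?thesis by (intro exI[of _ "(A0, C0)"]) simp
      qed
    qed
    then obtain X where X: "\<forall>j. j < k \<longrightarrow> fam (\<lambda>x y. \<not> E x y) m (fst (X j)) (C j) \<and> fam E m (snd (X j)) (C j) \<and>
                 real (card (fst (X j)) * card (snd (X j))) \<ge> (r' / T) powr (1/a)" by (rule choice[THEN exE])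
    define AA where "AA = (\<lambda>j. fst (X j))"
    define CC where "CC = (\<lambda>j. snd (X j))"
    have fams: "\<forall>j<k. fam (\<lambda>x y. \<not> E x y) m (AA j) (C j) \<and> fam E m (CC j) (C j) \<and>
                 real (card (AA j) * card (CC j)) \<ge> (r' / T) powr (1/a)" using X unfolding AA_def CC_def by simp
    have pw: "(r' / T) powr (1/a) = (r / T) powr (1/a) / real k"
    proof -
      have "r' / T = (r / T) / real k powr a" unfolding r'_def by simp
      then have "(r' / T) powr (1/a) = (r / T) powr (1/a) / (real k powr a) powr (1/a)"
        by (simp only: powr_divide)
      also have "(real k powr a) powr (1/a) = real k" using a kpos by (simp add: powr_powr)
      finally show ?thesis .
    qed
    have fams': "\<forall>j<k. fam (\<lambda>x y. \<not> E x y) m (AA j) (C j) \<and> fam E m (CC j) (C j) \<and>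
                 real (card (AA j) * card (CC j)) \<ge> (r / T) powr (1/a) / real k"
      using fams pw by simp
    have fams'': "\<forall>j<k. fam E m (CC j) (C j) \<and> fam (\<lambda>x y. \<not> E x y) m (AA j) (C j) \<and>
                 real (card (CC j) * card (AA j)) \<ge> (r / T) powr (1/a) / real k"
      using fams' by (simp add: mult.commute)
    have Csub: "\<And>i. i < k \<Longrightarrow> C i \<subseteq> B i \<and> i < mm" using C blk(3) by auto
    have Cdisj: "\<forall>i<k. \<forall>j<k. i \<noteq> j \<longrightarrow> C i \<inter> C j = {}"
    proof (intro allI impI)
      fix i j assume ij: "i < k" "j < k" "i \<noteq> j"
      then have "B i \<inter> B j = {}" using blk(2) Csub by blast
      then show "C i \<inter> C j = {}" using Csub ij by blast
    qed
    from cb show ?thesis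
    proof
      assume "complete_blockade E mm B"
      then have "\<forall>i<k. \<forall>j<k. i \<noteq> j \<longrightarrow> C i \<inter> C j = {} \<and> (\<forall>x\<in>C i. \<forall>y\<in>C j. E x y)"
        using Cdisj Csub unfolding complete_blockade_def by blast
      from combine[OF m0 _ CF this fams''] k obtain X Y where
        "fam E m X F" "fam (\<lambda>x y. \<not> E x y) m Y F" "real (card X * card Y) \<ge> (r / T) powr (1/a)" by auto
      then have "real (card Y * card X) \<ge> (r / T) powr (1/a)" by (simp only: mult.commute)
      then show ?thesis using \<open>fam E m X F\<close> \<open>fam (\<lambda>x y. \<not> E x y) m Y F\<close> by blast
    next
      assume "anticomplete_blockade E mm B"
      then have "\<forall>i<k. \<forall>j<k. i \<noteq> j \<longrightarrow> C i \<inter> C j = {} \<and> (\<forall>x\<in>C i. \<forall>y\<in>C j. \<not> E x y)"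
        using Cdisj Csub unfolding anticomplete_blockade_def by blast
      from combine[OF m0 _ CF this fams'] k show ?thesis by auto
    qed
  qed
qed

theorem theorem7p4:
  fixes V :: "'a set" and E :: "'a \<Rightarrow> 'a \<Rightarrow> bool" and eps a :: real
  assumes "graph V E"
    and "0 < eps" and "eps < 1/2" and "1 \<le> a"
    and "\<forall>S. S \<subseteq> V \<and> real (card S) \<ge> eps powr (2*a) * real (card V) \<longrightarrow>
           (\<exists>k::nat. 2 \<le> k \<and> real k \<le> 1/eps \<and>
              (\<exists>m B. kw_blockade S k (real (card S) / (real k) powr a) m B \<and>
                     (complete_blockade E m B \<or> anticomplete_blockade E m B)))"
  shows "\<exists>S. S \<subseteq> V \<and> real (card S) \<ge> eps powr (3*a) * real (card V) \<and> restricted eps S E"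
proof -
  have fV: "finite V" using assms(1) unfolding graph_def by blast
  have irr: "\<And>x. \<not> E x x" using assms(1) unfolding graph_def by blast
  define T where "T = eps powr (2*a) * real (card V)"
  have e3: "eps powr (3*a) = T / real (card V) * eps powr a" if "card V > 0"
  proof -
    have "eps powr (3*a) = eps powr (2*a + a)" by simp
    also have "\<dots> = eps powr (2*a) * eps powr a" by (rule powr_add)
    finally show ?thesis using that unfolding T_def by simp
  qed
  show ?thesis
  proof (cases "V = {}")
    case True
    then show ?thesis unfolding restricted_def sparse_def by auto
  next
    case Vne: False
    then have cV: "card V > 0" using fV by (simp add: card_gt_0_iff)
    have e3': "eps powr (3*a) * real (card V) = T * eps powr a" using e3[OF cV] cV by simp
    have ea1: "eps powr a \<le> 1" by (rule powr_le1) (use assms(2,3,4) in auto)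
    have Tpos: "0 \<le> T" unfolding T_def by simp
    show ?thesis
    proof (cases "T \<le> 1")
      case True
      obtain v where v: "v \<in> V" using Vne by blast
      have "T * eps powr a \<le> 1" using True ea1 Tpos by (intro mult_le_one) simp_all
      moreover have "restricted eps {v} E"
      proof -
        have "sparse eps {v} E" unfolding sparse_def
        proof
          fix w assume "w \<in> {v}"
          then have c: "card {u\<in>{v}. E w u} = 0" using irr by auto
          show "real (card {u\<in>{v}. E w u}) \<le> eps * real (card {v})" unfolding c using assms(2) by simp
        qed
        then show ?thesis unfolding restricted_def by simp
      qed
      ultimately have "eps powr (3*a) * real (card V) \<le> real (card {v})" "restricted eps {v} E"
        using e3' by simp_all
      then show ?thesis using v by blast
    next
      case False
      define m where "m = nat \<lceil>T * eps powr a\<rceil>"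
      have m0: "0 < m" unfolding m_def using False assms(2) by simp
      have mM: "T * eps powr a \<le> real m" unfolding m_def by linarith
      have e2: "eps powr (2*a) \<le> 1" by (rule powr_le1) (use assms(2,3,4) in auto)
      have "T \<le> real (card V)" unfolding T_def using e2 by (simp add: mult_left_le_one_le)
      moreover have "T * eps powr a \<le> T" using ea1 Tpos by (simp add: mult_left_le)
      ultimately have MV: "T * eps powr a \<le> real (card V)" by linarith
      have T1: "1 < T" using False by simp
      have "\<exists>A0 C0. fam (\<lambda>x y. \<not> E x y) m A0 V \<and> fam E m C0 V \<and> real (card A0 * card C0) \<ge> (real (card V) / T) powr (1/a)"
        by (rule main[OF assms(1-5) T_def T1 m_def m0 order_refl MV order_refl])
      then obtain A0 C0 where fA: "fam (\<lambda>x y. \<not> E x y) m A0 V" and fC: "fam E m C0 V"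
        and prod: "real (card A0 * card C0) \<ge> (real (card V) / T) powr (1/a)" by auto
      have "real (card V) / T = (1/eps) powr (2*a)"
        unfolding T_def using cV assms(2) by (simp add: powr_divide)
      then have "(real (card V) / T) powr (1/a) = (1/eps) powr 2"
        using assms(4) by (simp add: powr_powr)
      also have "\<dots> = (1/eps) * (1/eps)" using assms(2) by (simp add: powr_numeral power2_eq_square)
      finally have P: "real (card A0) * real (card C0) \<ge> (1/eps) * (1/eps)" using prod by simp
      have "real (card A0) \<ge> 1/eps \<or> real (card C0) \<ge> 1/eps"
      proof (rule ccontr)
        assume "\<not> ?thesis"
        then have "real (card A0) < 1/eps" "real (card C0) < 1/eps" by auto
        then have "real (card A0) * real (card C0) < (1/eps) * (1/eps)"
          using assms(2) by (intro mult_strict_mono) simp_all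
        then show False using P by linarith
      qed
      then show ?thesis
      proof
        assume big: "real (card A0) \<ge> 1/eps"
        have qa: "\<And>x y. E x y \<Longrightarrow> \<not> \<not> E x y" by simp
        note f = final[where R="\<lambda>x y. \<not> E x y" and Q=E, OF fA qa irr fV assms(2) big]
        have "0 < 1/eps" using assms(2) by simp
        then have "real (card A0) > 0" using big by linarith
        then have "card A0 \<ge> 1" by simp
        then have "m \<le> card A0 * m" by simp
        then have "real m \<le> real (card A0 * m)" by (rule of_nat_mono)
        then have "real (card (\<Union>A0)) \<ge> real m" using f(2) by (simp only:)
        then have "real (card (\<Union>A0)) \<ge> eps powr (3*a) * real (card V)" using e3' mM by linarith
        moreover have "sparse eps (\<Union>A0) (E)" unfolding sparse_def by (rule f(3))
        then have "restricted eps (\<Union>A0) E" unfolding restricted_def by simp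
        ultimately show ?thesis using f(1) by blast
      next
        assume big: "real (card C0) \<ge> 1/eps"
        have qc: "\<And>x y. compl_rel E x y \<Longrightarrow> \<not> E x y" unfolding compl_rel_def by simp
        have qi: "\<And>x. \<not> compl_rel E x x" unfolding compl_rel_def by simp
        note f = final[where R=E and Q="compl_rel E", OF fC qc qi fV assms(2) big]
        have "0 < 1/eps" using assms(2) by simp
        then have "real (card C0) > 0" using big by linarith
        then have "card C0 \<ge> 1" by simp
        then have "m \<le> card C0 * m" by simp
        then have "real m \<le> real (card C0 * m)" by (rule of_nat_mono)
        then have "real (card (\<Union>C0)) \<ge> real m" using f(2) by (simp only:)
        then have "real (card (\<Union>C0)) \<ge> eps powr (3*a) * real (card V)" using e3' mM by linarith
        moreover have "sparse eps (\<Union>C0) (compl_rel E)" unfolding sparse_def by (rule f(3))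
        then have "restricted eps (\<Union>C0) E" unfolding restricted_def by simp
        ultimately show ?thesis using f(1) by blast
      qed
    qed
  qed
qed

end
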